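(* Let $g$ be a continuous $g$-function on $X=A^{\mathbb{N}}$ and let $\mu$ be a compatible $g$-measure. For each $\ell\in\mathbb{N}$ let $\mu_\ell$ be the canonical $\ell$-step Markov approximation to $\mu$. Then $\mu_\ell\to\mu$ as $\ell\to\infty$ in the projective distance $\rho$; moreover \[ \rho(\mu_\ell,\mu)\le \operatorname{var}_\ell(\log\circ g)\quad\text{for all }\ell\in\mathbb{N}. \]
   Context: $A$ is a finite alphabet, $X=A^{\mathbb{N}}$ with product topology, $T$ the left shift, $\pmb{x}_n^m=x_nx_{n+1}\cdots x_m$, and $[\pmb{a}]=\{\pmb{x}: \pmb{x}_1^n=\pmb{a}\}$ for $\pmb{a}\in A^n$. $\mathcal{M}^+(X)$ is the set of Borel probability measures giving positive mass to every cylinder. Projective distance: $\rho(\mu,\nu)=\sup_{n}\max_{\pmb{a}\in A^n}\frac1n|\log(\mu[\pmb{a}]/\nu[\pmb{a}])|$. A $g$-function is a Borel function $g:X\to(0,1)$ with $\sum_{a\in A}g(a x_2x_3\cdots)=1$ for all $\pmb{x}\in X$. A compatible $g$-measure is a $T$-invariant $\mu\in\mathcal{M}^+(X)$ such that $\lim_{n\to\infty}\mu[a_1\pmb{a}_2^n]/\mu[\pmb{a}_2^n]=g(\pmb{a})$ for all $\pmb{a}\in X$. The canonical $\ell$-step Markov approximation $\mu_\ell$ is the measure with $\mu_\ell[\pmb{a}_1^n]=\mu[\pmb{a}_1^n]$ for $n\le \ell$ and $\mu_\ell[\pmb{a}_1^n]=\mu[\pmb{a}_1^\ell]\prod_{j=1}^{n-\ell}\mu[\pmb{a}_j^{j+\ell}]/\mu[\pmb{a}_j^{j+\ell-1}]$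 for $n\ge\ell$. For $\phi:X\to\mathbb{R}$, $\operatorname{var}_\ell\phi=\max_{\pmb{a}\in A^\ell}\{\sup_{\pmb{x}\in[\pmb{a}]}\phi(\pmb{x})-\inf_{\pmb{x}\in[\pmb{a}]}\phi(\pmb{x})\}$. *)

theory Defs
  imports "HOL-Probability.Probability"
begin

text \<open>The alphabet A is a finite type 'a; X = A^N is the type nat => 'a
  (coordinate i of the sequence is x i, the paper's x_{i+1}).\<close>

definition topX :: "(nat \<Rightarrow> 'a) topology" where
  "topX = product_topology (\<lambda>_. discrete_topology (UNIV :: 'a set)) UNIV"

definition borelX :: "(nat \<Rightarrow> 'a) measure" where
  "borelX = sigma UNIV {S. openin topX S}"

definition shiftX :: "(nat \<Rightarrow> 'a) \<Rightarrow> (nat \<Rightarrow> 'a)" where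
  "shiftX x = (\<lambda>i. x (Suc i))"

definition sconsX :: "'a \<Rightarrow> (nat \<Rightarrow> 'a) \<Rightarrow> (nat \<Rightarrow> 'a)" where
  "sconsX a x = (\<lambda>i. if i = 0 then a else x (i - 1))"

definition cyl :: "'a list \<Rightarrow> (nat \<Rightarrow> 'a) set" where
  "cyl w = {x. \<forall>i<length w. x i = w ! i}"

text \<open>The initial word x_{m+1} ... x_n (0-based: positions m..n-1).\<close>
definition word :: "(nat \<Rightarrow> 'a) \<Rightarrow> nat \<Rightarrow> nat \<Rightarrow> 'a list" where
  "word x m n = map x [m..<n]"

definition Mplus :: "(nat \<Rightarrow> 'a) measure set" where
  "Mplus = {\<mu>. prob_space \<mu> \<and> sets \<mu> = sets borelX \<and> (\<forall>w. measure \<mu> (cyl w) > 0)}"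

definition shift_invariant :: "(nat \<Rightarrow> 'a) measure \<Rightarrow> bool" where
  "shift_invariant \<mu> \<longleftrightarrow> (\<forall>S \<in> sets \<mu>. emeasure \<mu> (shiftX -` S) = emeasure \<mu> S)"

text \<open>Projective distance (possibly infinite, hence ereal).\<close>
definition proj_dist :: "(nat \<Rightarrow> 'a) measure \<Rightarrow> (nat \<Rightarrow> 'a) measure \<Rightarrow> ereal" where
  "proj_dist \<mu> \<nu> = (SUP n \<in> {1..}. ereal (Max {\<bar>ln (measure \<mu> (cyl w) / measure \<nu> (cyl w))\<bar> / real n
                                                | w :: 'a list. length w = n}))"

definition g_function :: "((nat \<Rightarrow> 'a::finite) \<Rightarrow> real) \<Rightarrow> bool" where
  "g_function g \<longleftrightarrow> g \<in> borel_measurable borelX \<and> (\<forall>x. 0 < g x \<and> g x < 1)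
     \<and> (\<forall>x. (\<Sum>a\<in>UNIV. g (sconsX a (shiftX x))) = 1)"

definition compatible_g_measure :: "((nat \<Rightarrow> 'a::finite) \<Rightarrow> real) \<Rightarrow> (nat \<Rightarrow> 'a) measure \<Rightarrow> bool" where
  "compatible_g_measure g \<mu> \<longleftrightarrow> shift_invariant \<mu> \<and> \<mu> \<in> Mplus \<and>
     (\<forall>x. (\<lambda>n. measure \<mu> (cyl (word x 0 n)) / measure \<mu> (cyl (word x 1 n)))
            \<longlonglongrightarrow> g x)"

definition markov_cyl :: "(nat \<Rightarrow> 'a) measure \<Rightarrow> nat \<Rightarrow> 'a list \<Rightarrow> real" where
  "markov_cyl \<mu> l w =
     (if length w \<le> l then measure \<mu> (cyl w)
      else measure \<mu> (cyl (take l w)) *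
        (\<Prod>j<length w - l. measure \<mu> (cyl (take (l + 1) (drop j w)))
                             / measure \<mu> (cyl (take l (drop j w)))))"

definition is_markov_approx :: "(nat \<Rightarrow> 'a) measure \<Rightarrow> nat \<Rightarrow> (nat \<Rightarrow> 'a) measure \<Rightarrow> bool" where
  "is_markov_approx \<mu> l \<nu> \<longleftrightarrow> prob_space \<nu> \<and> sets \<nu> = sets borelX \<and>
     (\<forall>w. measure \<nu> (cyl w) = markov_cyl \<mu> l w)"

definition var :: "nat \<Rightarrow> ((nat \<Rightarrow> 'a::finite) \<Rightarrow> real) \<Rightarrow> real" where
  "var l \<phi> = Max {(SUP x \<in> cyl w. \<phi> x) - (INF x \<in> cyl w. \<phi> x) | w :: 'a list. length w = l}"

end

theory Submission
  imports Defs
begin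

lemma topspace_topX: "topspace topX = UNIV"
  by (simp add: topX_def topspace_product_topology PiE_UNIV_domain)

lemma compact_topX: "compact_space (topX :: (nat \<Rightarrow> 'a::finite) topology)"
  unfolding topX_def by (simp add: compact_space_product_topology compact_space_discrete_topology)

lemma cyl_open: "openin topX (cyl w)"
  unfolding topX_def openin_product_topology_alt
proof
  fix x assume x: "x \<in> cyl w"
  define U where "U = (\<lambda>i. if i < length w then {w!i} else UNIV)"
  have "{i \<in> UNIV. U i \<noteq> topspace (discrete_topology UNIV)} \<subseteq> {..<length w}"
    by (auto simp: U_def)
  hence "finite {i \<in> UNIV. U i \<noteq> topspace (discrete_topology UNIV)}"
    using finite_subset by blast
  moreover have "x \<in> Pi\<^sub>E UNIV U" using x by (auto simp: U_def cyl_def PiE_UNIV_domain)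
  moreover have "Pi\<^sub>E UNIV U \<subseteq> cyl w"
  proof
    fix y assume "y \<in> Pi\<^sub>E UNIV U"
    hence yU: "\<And>i. y i \<in> U i" by (auto simp: PiE_UNIV_domain)
    show "y \<in> cyl w" unfolding cyl_def
    proof (intro CollectI allI impI)
      fix i assume "i < length w"
      with yU[of i] show "y i = w!i" by (simp add: U_def)
    qed
  qed
  ultimately show "\<exists>U. finite {i \<in> UNIV. U i \<noteq> topspace (discrete_topology UNIV)} \<and>
          (\<forall>i\<in>UNIV. openin (discrete_topology UNIV) (U i)) \<and> x \<in> Pi\<^sub>E UNIV U \<and> Pi\<^sub>E UNIV U \<subseteq> cyl w"
    by auto
qed

lemma cyl_sets: "cyl w \<in> sets borelX"
  unfolding borelX_def using cyl_open[of w]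
  by (simp add: sets_measure_of)

lemma open_contains_cyl:
  assumes "openin topX S" "x \<in> S"
  shows "\<exists>n. cyl (word x 0 n) \<subseteq> S"
proof -
  obtain U where U: "finite {i \<in> UNIV. U i \<noteq> topspace (discrete_topology UNIV)}"
    "x \<in> Pi\<^sub>E UNIV U" "Pi\<^sub>E UNIV U \<subseteq> S"
    using assms unfolding topX_def openin_product_topology_alt by blast
  define n where "n = Suc (Max {i. U i \<noteq> UNIV})"
  have fin: "finite {i. U i \<noteq> UNIV}" using U(1) by simp
  have "cyl (word x 0 n) \<subseteq> Pi\<^sub>E UNIV U"
  proof
    fix y assume y: "y \<in> cyl (word x 0 n)"
    show "y \<in> Pi\<^sub>E UNIV U"
      unfolding PiE_UNIV_domain
    proof
      fix i
      show "y i \<in> U i"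
      proof (cases "U i = UNIV")
        case False
        hence "i \<le> Max {i. U i \<noteq> UNIV}" using fin by auto
        hence "i < n" by (simp add: n_def)
        hence "y i = x i" using y by (simp add: cyl_def word_def)
        thus ?thesis using U(2) by (auto simp: PiE_UNIV_domain)
      qed auto
    qed
  qed
  thus ?thesis using U(3) by blast
qed

lemma unif_cont:
  fixes f :: "(nat \<Rightarrow> 'a::finite) \<Rightarrow> real"
  assumes f: "continuous_map topX euclideanreal f" and e: "e > 0"
  shows "\<exists>L. \<forall>y z. (\<forall>i<L. y i = z i) \<longrightarrow> \<bar>f y - f z\<bar> < e"
proof -
  have "\<forall>x. \<exists>n. cyl (word x 0 n) \<subseteq> {y. \<bar>f y - f x\<bar> < e/2}"
  proof
    fix x
    have "openin topX {y \<in> topspace topX. f y \<in> ball (f x) (e/2)}"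
      by (rule openin_continuous_map_preimage[OF f]) simp
    moreover have "{y \<in> topspace topX. f y \<in> ball (f x) (e/2)} = {y. \<bar>f y - f x\<bar> < e/2}"
      by (auto simp: topspace_topX dist_real_def abs_minus_commute)
    ultimately have "openin topX {y. \<bar>f y - f x\<bar> < e/2}" by simp
    thus "\<exists>n. cyl (word x 0 n) \<subseteq> {y. \<bar>f y - f x\<bar> < e/2}"
      by (rule open_contains_cyl) (simp add: e)
  qed
  from choice[OF this] obtain n where n0: "\<forall>x. cyl (word x 0 (n x)) \<subseteq> {y. \<bar>f y - f x\<bar> < e/2}" by blast
  hence n: "\<And>x. cyl (word x 0 (n x)) \<subseteq> {y. \<bar>f y - f x\<bar> < e/2}" by blast
  have "compactin (topX :: (nat \<Rightarrow> 'a) topology) (topspace topX)" using compact_topX by (simp add: compact_space_def)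
  hence cpt0: "\<forall>U. (\<forall>B\<in>U. openin (topX :: (nat \<Rightarrow> 'a) topology) B) \<and> topspace topX \<subseteq> \<Union>U \<longrightarrow> (\<exists>F. finite F \<and> F \<subseteq> U \<and> topspace topX \<subseteq> \<Union>F)"
    unfolding compactin_def by (rule conjunct2)
  have o1: "\<forall>B\<in>(\<lambda>x. cyl (word x 0 (n x))) ` UNIV. openin topX B"
    by (simp add: cyl_open)
  have o2: "topspace topX \<subseteq> \<Union>((\<lambda>x. cyl (word x 0 (n x))) ` UNIV)"
  proof
    fix y :: "nat \<Rightarrow> 'a" assume "y \<in> topspace topX"
    have "y \<in> cyl (word y 0 (n y))" by (simp add: cyl_def word_def)
    thus "y \<in> \<Union>((\<lambda>x. cyl (word x 0 (n x))) ` UNIV)" by blast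
  qed
  obtain F where F: "finite F" "F \<subseteq> (\<lambda>x. cyl (word x 0 (n x))) ` UNIV"
      "topspace topX \<subseteq> \<Union>F"
    using cpt0[rule_format, OF conjI[OF o1 o2]] by blast
  then obtain K where K: "finite K" "F = (\<lambda>x. cyl (word x 0 (n x))) ` K"
    by (meson finite_subset_image)
  define L where "L = (\<Sum>x\<in>K. n x)"
  show ?thesis
  proof (intro exI allI impI)
    fix y z :: "nat \<Rightarrow> 'a" assume yz: "\<forall>i<L. y i = z i"
    obtain x where x: "x \<in> K" "y \<in> cyl (word x 0 (n x))" using F(3) K(2) by (auto simp: topspace_topX)
    have "n x \<le> L" unfolding L_def using K(1) x(1) by (simp add: member_le_sum)
    hence "z \<in> cyl (word x 0 (n x))" using x(2) yz by (auto simp: cyl_def word_def)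
    hence "\<bar>f z - f x\<bar> < e/2" using n[of x] by blast
    moreover have "\<bar>f y - f x\<bar> < e/2" using n[of x] x(2) by blast
    ultimately show "\<bar>f y - f z\<bar> < e" by linarith
  qed
qed



lemma greedy:
  fixes r :: "'a list \<Rightarrow> real"
  assumes step: "\<And>u. u \<noteq> [] \<Longrightarrow> \<exists>b. r u \<le> r (u @ [b])" and v: "v \<noteq> []"
  shows "\<exists>x\<in>cyl v. \<forall>n\<ge>length v. r v \<le> r (word x 0 n)"
proof -
  define nxt where "nxt u = u @ [SOME b. r u \<le> r (u @ [b])]" for u
  define ext where "ext k = (nxt ^^ k) v" for k
  have ext_Suc: "ext (Suc k) = ext k @ [SOME b. r (ext k) \<le> r (ext k @ [b])]" for k
    by (simp add: ext_def nxt_def)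
  have len: "length (ext k) = length v + k" for k
    by (induction k) (auto simp: ext_Suc, simp add: ext_def)
  have ne: "ext k \<noteq> []" for k using len[of k] v by auto
  have mono: "r v \<le> r (ext k)" for k
  proof (induction k)
    case 0 thus ?case by (simp add: ext_def)
  next
    case (Suc k)
    have "r (ext k) \<le> r (ext (Suc k))"
      unfolding ext_Suc using step[OF ne[of k]] by (rule someI_ex)
    thus ?case using Suc by linarith
  qed
  have pre: "k \<le> m \<Longrightarrow> \<exists>s. ext m = ext k @ s" for k m
  proof (induction m)
    case 0 thus ?case by auto
  next
    case (Suc m)
    show ?case
    proof (cases "k = Suc m")
      case False
      with Suc obtain s where "ext m = ext k @ s" by auto
      thus ?thesis by (auto simp: ext_Suc)
    qed auto
  qed
  have v0: "ext 0 = v" by (simp add: ext_def)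
  have nth_eq: "i < length (ext k) \<Longrightarrow> i < length (ext m) \<Longrightarrow> ext k ! i = ext m ! i" for i k m
  proof (cases "k \<le> m")
    case True
    assume "i < length (ext k)"
    with pre[OF True] show ?thesis by (auto simp: nth_append)
  next
    case False
    assume "i < length (ext m)"
    with pre[of m k] False show ?thesis by (auto simp: nth_append)
  qed
  define x where "x i = ext (Suc i) ! i" for i
  have wx: "word x 0 n = ext (n - length v)" if "n \<ge> length v" for n
  proof (rule nth_equalityI)
    show "length (word x 0 n) = length (ext (n - length v))" using that by (simp add: word_def len)
    fix i assume "i < length (word x 0 n)"
    hence i: "i < n" by (simp add: word_def)
    have "word x 0 n ! i = x i" using i by (simp add: word_def)
    also have "\<dots> = ext (n - length v) ! i" unfolding x_def
      by (rule nth_eq) (use i that in \<open>auto simp: len\<close>)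
    finally show "word x 0 n ! i = ext (n - length v) ! i" .
  qed
  have "x \<in> cyl v"
    unfolding cyl_def
  proof (intro CollectI allI impI)
    fix i assume i: "i < length v"
    have "x i = ext 0 ! i" unfolding x_def by (rule nth_eq) (use i in \<open>auto simp: len\<close>)
    thus "x i = v ! i" by (simp add: v0)
  qed
  moreover have "\<forall>n\<ge>length v. r v \<le> r (word x 0 n)" using wx mono by simp
  ultimately show ?thesis by blast
qed

lemma finite_meas: "\<mu> \<in> Mplus \<Longrightarrow> finite_measure \<mu>"
  by (simp add: Mplus_def prob_space_def)

lemma cyl_sets_mu: "\<mu> \<in> Mplus \<Longrightarrow> cyl w \<in> sets \<mu>"
  using cyl_sets by (auto simp: Mplus_def)

lemma M_pos: "\<mu> \<in> Mplus \<Longrightarrow> measure \<mu> (cyl w) > 0"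
  by (simp add: Mplus_def)

lemma M_split:
  fixes \<mu> :: "(nat \<Rightarrow> 'a::finite) measure"
  assumes mu: "\<mu> \<in> Mplus"
  shows "measure \<mu> (cyl u) = (\<Sum>b\<in>UNIV. measure \<mu> (cyl (u @ [b])))"
proof -
  have eq: "cyl u = (\<Union>b\<in>UNIV. cyl (u @ [b]))"
  proof safe
    fix x assume "x \<in> cyl u"
    hence "x \<in> cyl (u @ [x (length u)])"
      by (auto simp: cyl_def nth_append less_Suc_eq)
    thus "x \<in> (\<Union>b\<in>UNIV. cyl (u @ [b]))" by blast
  next
    fix x b assume "x \<in> cyl (u @ [b])"
    thus "x \<in> cyl u" by (auto simp: cyl_def nth_append)
  qed
  have disj: "disjoint_family_on (\<lambda>b. cyl (u @ [b])) UNIV"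
    unfolding disjoint_family_on_def
  proof (intro ballI impI)
    fix a b :: 'a assume "a \<noteq> b"
    show "cyl (u @ [a]) \<inter> cyl (u @ [b]) = {}"
    proof (rule ccontr)
      assume "cyl (u @ [a]) \<inter> cyl (u @ [b]) \<noteq> {}"
      then obtain x where "x \<in> cyl (u @ [a])" "x \<in> cyl (u @ [b])" by blast
      hence "x (length u) = a" "x (length u) = b" by (auto simp: cyl_def)
      thus False using \<open>a \<noteq> b\<close> by simp
    qed
  qed
  show ?thesis unfolding eq
    by (rule finite_measure.finite_measure_finite_Union[OF finite_meas[OF mu]])
       (use disj cyl_sets_mu[OF mu] in auto)
qed

lemma ratio_up:
  fixes \<mu> :: "(nat \<Rightarrow> 'a::finite) measure"
  assumes mu: "\<mu> \<in> Mplus" and u: "u \<noteq> []"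
  shows "\<exists>b. measure \<mu> (cyl u) / measure \<mu> (cyl (tl u))
            \<le> measure \<mu> (cyl (u @ [b])) / measure \<mu> (cyl (tl (u @ [b])))"
proof (rule ccontr)
  let ?M = "\<lambda>w. measure \<mu> (cyl w)"
  define c where "c = ?M u / ?M (tl u)"
  assume "\<not> ?thesis"
  hence lt: "?M (u @ [b]) / ?M (tl u @ [b]) < c" for b using u by (auto simp: c_def not_le)
  have "?M (u @ [b]) < c * ?M (tl u @ [b])" for b
    using lt[of b] M_pos[OF mu, of "tl u @ [b]"] by (simp add: divide_less_eq)
  hence "(\<Sum>b\<in>UNIV. ?M (u @ [b])) < (\<Sum>b\<in>UNIV. c * ?M (tl u @ [b]))"
    by (intro sum_strict_mono) auto
  hence "?M u < c * ?M (tl u)"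
    by (simp add: M_split[OF mu, of u] M_split[OF mu, of "tl u"] sum_distrib_left)
  moreover have "c * ?M (tl u) = ?M u" using M_pos[OF mu, of "tl u"] by (simp add: c_def)
  ultimately show False by simp
qed

lemma ratio_down:
  fixes \<mu> :: "(nat \<Rightarrow> 'a::finite) measure"
  assumes mu: "\<mu> \<in> Mplus" and u: "u \<noteq> []"
  shows "\<exists>b. measure \<mu> (cyl (u @ [b])) / measure \<mu> (cyl (tl (u @ [b])))
            \<le> measure \<mu> (cyl u) / measure \<mu> (cyl (tl u))"
proof (rule ccontr)
  let ?M = "\<lambda>w. measure \<mu> (cyl w)"
  define c where "c = ?M u / ?M (tl u)"
  assume "\<not> ?thesis"
  hence lt: "c < ?M (u @ [b]) / ?M (tl u @ [b])" for b using u by (auto simp: c_def not_le)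
  have "c * ?M (tl u @ [b]) < ?M (u @ [b])" for b
    using lt[of b] M_pos[OF mu, of "tl u @ [b]"] by (simp add: less_divide_eq)
  hence "(\<Sum>b\<in>UNIV. c * ?M (tl u @ [b])) < (\<Sum>b\<in>UNIV. ?M (u @ [b]))"
    by (intro sum_strict_mono) auto
  hence "c * ?M (tl u) < ?M u"
    by (simp add: M_split[OF mu, of u] M_split[OF mu, of "tl u"] sum_distrib_left)
  moreover have "c * ?M (tl u) = ?M u" using M_pos[OF mu, of "tl u"] by (simp add: c_def)
  ultimately show False by simp
qed



lemma tl_word: "tl (word x 0 n) = word x 1 n"
  by (cases n) (auto simp: word_def upt_conv_Cons)

lemma g_upper:
  fixes g :: "(nat \<Rightarrow> 'a::finite) \<Rightarrow> real"
  assumes c: "compatible_g_measure g \<mu>" and u: "u \<noteq> []"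
  shows "\<exists>x\<in>cyl u. measure \<mu> (cyl u) / measure \<mu> (cyl (tl u)) \<le> g x"
proof -
  have mu: "\<mu> \<in> Mplus" using c by (simp add: compatible_g_measure_def)
  let ?r = "\<lambda>w. measure \<mu> (cyl w) / measure \<mu> (cyl (tl w))"
  obtain x where x: "x \<in> cyl u" "\<forall>n\<ge>length u. ?r u \<le> ?r (word x 0 n)"
    using greedy[of ?r u] ratio_up[OF mu] u by blast
  have lim: "(\<lambda>n. measure \<mu> (cyl (word x 0 n)) / measure \<mu> (cyl (word x 1 n))) \<longlonglongrightarrow> g x"
    using c by (simp add: compatible_g_measure_def)
  have "?r u \<le> g x"
    by (rule LIMSEQ_le_const[OF lim]) (use x(2) in \<open>auto simp: tl_word\<close>)
  thus ?thesis using x(1) by blast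
qed

lemma g_lower:
  fixes g :: "(nat \<Rightarrow> 'a::finite) \<Rightarrow> real"
  assumes c: "compatible_g_measure g \<mu>" and u: "u \<noteq> []"
  shows "\<exists>x\<in>cyl u. g x \<le> measure \<mu> (cyl u) / measure \<mu> (cyl (tl u))"
proof -
  have mu: "\<mu> \<in> Mplus" using c by (simp add: compatible_g_measure_def)
  let ?r = "\<lambda>w. measure \<mu> (cyl w) / measure \<mu> (cyl (tl w))"
  have st: "\<exists>b. - ?r v \<le> - ?r (v @ [b])" if "v \<noteq> []" for v
    using ratio_down[OF mu that] by auto
  obtain x where x: "x \<in> cyl u" "\<forall>n\<ge>length u. - ?r u \<le> - ?r (word x 0 n)"
    using greedy[of "\<lambda>w. - ?r w" u, OF st u] by blast
  have lim: "(\<lambda>n. measure \<mu> (cyl (word x 0 n)) / measure \<mu> (cyl (word x 1 n))) \<longlonglongrightarrow> g x"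
    using c by (simp add: compatible_g_measure_def)
  have "g x \<le> ?r u"
    by (rule LIMSEQ_le_const2[OF lim]) (use x(2) in \<open>auto simp: tl_word\<close>)
  thus ?thesis using x(1) by blast
qed

lemma markov_prod:
  assumes "length w \<ge> l"
  shows "markov_cyl \<mu> l w = measure \<mu> (cyl (take l w)) *
        (\<Prod>j<length w - l. measure \<mu> (cyl (take (l + 1) (drop j w)))
                             / measure \<mu> (cyl (take l (drop j w))))"
  using assms by (cases "length w = l") (auto simp: markov_cyl_def)

lemma markov_cons:
  assumes mu: "\<mu> \<in> Mplus" and len: "length w \<ge> l"
  shows "markov_cyl \<mu> l (a # w) = markov_cyl \<mu> l w *
     (measure \<mu> (cyl (take (l+1) (a # w))) / measure \<mu> (cyl (take l w)))"
proof -
  let ?M = "\<lambda>w. measure \<mu> (cyl w)"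
  define f where "f j = ?M (take (l + 1) (drop j (a#w))) / ?M (take l (drop j (a#w)))" for j
  define P where "P = (\<Prod>j<length w - l. ?M (take (l + 1) (drop j w)) / ?M (take l (drop j w)))"
  have "length (a#w) - l = Suc (length w - l)" using len by simp
  hence "markov_cyl \<mu> l (a # w) = ?M (take l (a#w)) * (\<Prod>j<Suc (length w - l). f j)"
    using len by (simp add: markov_prod f_def del: take_Suc_Cons)
  also have "(\<Prod>j<Suc (length w - l). f j) = f 0 * (\<Prod>j<length w - l. f (Suc j))"
    by (rule prod.lessThan_Suc_shift)
  also have "(\<Prod>j<length w - l. f (Suc j)) = P" by (simp add: f_def P_def)
  also have "?M (take l (a#w)) * (f 0 * P) = ?M (take (l+1) (a#w)) * P"
    using M_pos[OF mu, of "take l (a#w)"] by (simp add: f_def del: take_Suc_Cons)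
  finally have 1: "markov_cyl \<mu> l (a # w) = ?M (take (l+1) (a#w)) * P" .
  have 2: "markov_cyl \<mu> l w = ?M (take l w) * P" using len by (simp add: markov_prod P_def)
  show ?thesis unfolding 1 2 using M_pos[OF mu, of "take l w"] by simp
qed



lemma cyl_take: "cyl u \<subseteq> cyl (take k u)"
  by (auto simp: cyl_def)

lemma markov_bound:
  fixes g :: "(nat \<Rightarrow> 'a::finite) \<Rightarrow> real"
  assumes c: "compatible_g_measure g \<mu>" and gpos: "\<And>x. g x > 0" and l: "l \<ge> 1"
    and V: "\<And>cw x y. length cw = l \<Longrightarrow> x \<in> cyl cw \<Longrightarrow> y \<in> cyl cw \<Longrightarrow> ln (g x) - ln (g y) \<le> V"
  shows "markov_cyl \<mu> l w > 0 \<and>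
         \<bar>ln (markov_cyl \<mu> l w) - ln (measure \<mu> (cyl w))\<bar> \<le> real (length w - l) * V"
proof (induction w)
  have mu: "\<mu> \<in> Mplus" using c by (simp add: compatible_g_measure_def)
  case Nil thus ?case using M_pos[OF mu] by (simp add: markov_cyl_def)
next
  have mu: "\<mu> \<in> Mplus" using c by (simp add: compatible_g_measure_def)
  let ?M = "\<lambda>w. measure \<mu> (cyl w)"
  case (Cons a w)
  show ?case
  proof (cases "length (a # w) \<le> l")
    case True thus ?thesis using M_pos[OF mu] by (simp add: markov_cyl_def)
  next
    case False
    hence len: "length w \<ge> l" by simp
    define u where "u = take (l+1) (a # w)"
    have une: "u \<noteq> []" by (simp add: u_def)
    have tlu: "tl u = take l w" by (simp add: u_def)
    define cw where "cw = take l (a # w)"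
    have lcw: "length cw = l" using len by (simp add: cw_def)
    have sub1: "cyl u \<subseteq> cyl cw"
    proof -
      have "cw = take l u" by (simp add: u_def cw_def take_take del: take_Suc_Cons)
      thus ?thesis using cyl_take by simp
    qed
    have sub2: "cyl (a # w) \<subseteq> cyl u" unfolding u_def by (rule cyl_take)
    define A where "A = ?M u / ?M (tl u)"
    define B where "B = ?M (a # w) / ?M w"
    have Apos: "A > 0" using M_pos[OF mu] by (simp add: A_def)
    have Bpos: "B > 0" using M_pos[OF mu] by (simp add: B_def)
    obtain x1 where x1: "x1 \<in> cyl u" "A \<le> g x1" using g_upper[OF c une] by (auto simp: A_def)
    obtain y1 where y1: "y1 \<in> cyl u" "g y1 \<le> A" using g_lower[OF c une] by (auto simp: A_def)
    obtain x2 where x2: "x2 \<in> cyl (a#w)" "B \<le> g x2" using g_upper[OF c, of "a#w"] by (auto simp: B_def)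
    obtain y2 where y2: "y2 \<in> cyl (a#w)" "g y2 \<le> B" using g_lower[OF c, of "a#w"] by (auto simp: B_def)
    have "ln A \<le> ln (g x1)" using x1 Apos by simp
    moreover have "ln (g y2) \<le> ln B" using y2 gpos[of y2] by simp
    moreover have "ln (g x1) - ln (g y2) \<le> V"
      using V[OF lcw] x1(1) y2(1) sub1 sub2 by blast
    moreover have "ln B \<le> ln (g x2)" using x2 Bpos by simp
    moreover have "ln (g y1) \<le> ln A" using y1 gpos[of y1] by simp
    moreover have "ln (g x2) - ln (g y1) \<le> V"
      using V[OF lcw] x2(1) y1(1) sub1 sub2 by blast
    ultimately have AB: "\<bar>ln A - ln B\<bar> \<le> V" by linarith
    have mk: "markov_cyl \<mu> l (a # w) = markov_cyl \<mu> l w * A"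
    proof -
      have "A = ?M (take (l+1) (a # w)) / ?M (take l w)" unfolding A_def tlu by (simp only: u_def)
      thus ?thesis using markov_cons[OF mu len, of a] by simp
    qed
    have Mw: "?M (a # w) = ?M w * B" using M_pos[OF mu, of w] by (simp add: B_def)
    have mpos: "markov_cyl \<mu> l w > 0" using Cons.IH by simp
    have pos: "markov_cyl \<mu> l (a # w) > 0" unfolding mk using mpos Apos by simp
    have "ln (markov_cyl \<mu> l (a # w)) - ln (?M (a # w))
        = (ln (markov_cyl \<mu> l w) - ln (?M w)) + (ln A - ln B)"
      unfolding mk Mw using mpos Apos Bpos M_pos[OF mu, of w] by (simp add: ln_mult)
    moreover have "real (length (a # w) - l) = real (length w - l) + 1" using len by simp
    ultimately have "\<bar>ln (markov_cyl \<mu> l (a # w)) - ln (?M (a # w))\<bar> \<le> real (length (a # w) - l) * V"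
      using Cons.IH AB by (simp add: distrib_right) linarith
    thus ?thesis using pos by simp
  qed
qed



lemma var_set_finite: "finite {f w | w :: 'a::finite list. length w = l}"
proof -
  have "{w :: 'a list. length w = l} = {xs. set xs \<subseteq> UNIV \<and> length xs = l}" by simp
  hence "finite {w :: 'a list. length w = l}" using finite_lists_length_eq[of "UNIV :: 'a set" l] by simp
  thus ?thesis by (simp add: setcompr_eq_image)
qed

lemma cyl_nonempty: "(\<lambda>i. cw ! i) \<in> cyl cw"
  by (simp add: cyl_def)

lemma var_prop:
  fixes \<phi> :: "(nat \<Rightarrow> 'a::finite) \<Rightarrow> real"
  assumes B: "\<And>x. \<bar>\<phi> x\<bar> \<le> B" and cw: "length cw = l" and x: "x \<in> cyl cw" and y: "y \<in> cyl cw"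
  shows "\<phi> x - \<phi> y \<le> var l \<phi>"
proof -
  have ba: "bdd_above (\<phi> ` cyl cw)" using B by (intro bdd_aboveI[of _ B]) (auto simp: abs_le_iff)
  have bb: "bdd_below (\<phi> ` cyl cw)" using B by (intro bdd_belowI[of _ "-B"]) (metis abs_le_D2 minus_le_iff imageE)
  have "\<phi> x \<le> (SUP z \<in> cyl cw. \<phi> z)" by (rule cSUP_upper[OF x ba])
  moreover have "(INF z \<in> cyl cw. \<phi> z) \<le> \<phi> y" by (rule cINF_lower[OF bb y])
  moreover have "(SUP z \<in> cyl cw. \<phi> z) - (INF z \<in> cyl cw. \<phi> z) \<le> var l \<phi>"
    unfolding var_def by (rule Max_ge[OF var_set_finite]) (use cw in blast)
  ultimately show ?thesis by linarith
qed

lemma var_nonneg: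
  fixes \<phi> :: "(nat \<Rightarrow> 'a::finite) \<Rightarrow> real"
  assumes B: "\<And>x. \<bar>\<phi> x\<bar> \<le> B"
  shows "0 \<le> var l \<phi>"
proof -
  let ?cw = "replicate l (undefined :: 'a)"
  have "\<phi> (\<lambda>i. ?cw ! i) - \<phi> (\<lambda>i. ?cw ! i) \<le> var l \<phi>"
    by (rule var_prop[OF B]) (auto intro: cyl_nonempty)
  thus ?thesis by simp
qed

lemma var_small:
  fixes \<phi> :: "(nat \<Rightarrow> 'a::finite) \<Rightarrow> real"
  assumes B: "\<And>x. \<bar>\<phi> x\<bar> \<le> B" and e: "\<And>x y. (\<forall>i<l. x i = y i) \<Longrightarrow> \<bar>\<phi> x - \<phi> y\<bar> \<le> e"
  shows "var l \<phi> \<le> e"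
  unfolding var_def
proof (rule Max.boundedI[OF var_set_finite])
  show "{(SUP x\<in>cyl w. \<phi> x) - (INF x\<in>cyl w. \<phi> x) |w :: 'a list. length w = l} \<noteq> {}"
    by (rule ccontr) (metis (mono_tags, lifting) empty_iff length_replicate mem_Collect_eq)
next
  fix a assume "a \<in> {(SUP x\<in>cyl w. \<phi> x) - (INF x\<in>cyl w. \<phi> x) |w :: 'a list. length w = l}"
  then obtain cw :: "'a list" where cw: "length cw = l" "a = (SUP x\<in>cyl cw. \<phi> x) - (INF x\<in>cyl cw. \<phi> x)" by blast
  have ne: "cyl cw \<noteq> {}" using cyl_nonempty by blast
  have bb: "bdd_below (\<phi> ` cyl cw)" using B by (intro bdd_belowI[of _ "-B"]) (metis abs_le_D2 minus_le_iff imageE)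
  have "\<phi> x - e \<le> (INF z \<in> cyl cw. \<phi> z)" if x: "x \<in> cyl cw" for x
  proof (rule cINF_greatest[OF ne])
    fix y assume y: "y \<in> cyl cw"
    have "\<forall>i<l. x i = y i" using x y cw(1) by (auto simp: cyl_def)
    hence "\<bar>\<phi> x - \<phi> y\<bar> \<le> e" by (rule e)
    thus "\<phi> x - e \<le> \<phi> y" by linarith
  qed
  hence "(SUP z \<in> cyl cw. \<phi> z) \<le> (INF z \<in> cyl cw. \<phi> z) + e"
    by (intro cSUP_least[OF ne]) (auto simp: algebra_simps)
  thus "a \<le> e" using cw(2) by simp
qed



theorem theorem3p1:
  fixes g :: "(nat \<Rightarrow> 'a::finite) \<Rightarrow> real"
    and \<mu> :: "(nat \<Rightarrow> 'a) measure"
    and \<mu>l :: "nat \<Rightarrow> (nat \<Rightarrow> 'a) measure"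
  assumes "g_function g"
    and "continuous_map topX euclideanreal g"
    and "compatible_g_measure g \<mu>"
    and "\<forall>l\<ge>1. is_markov_approx \<mu> l (\<mu>l l)"
  shows "(\<lambda>l. proj_dist (\<mu>l l) \<mu>) \<longlonglongrightarrow> 0 \<and>
         (\<forall>l\<ge>1. proj_dist (\<mu>l l) \<mu> \<le> ereal (var l (ln \<circ> g)))"
proof -
  note gf = assms(1) and gc = assms(2) and c = assms(3) and mk = assms(4)
  have mu: "\<mu> \<in> Mplus" using c by (simp add: compatible_g_measure_def)
  have gpos: "\<And>x. 0 < g x" and glt: "\<And>x. g x < 1" using gf by (auto simp: g_function_def)
  have "compactin (topX :: (nat \<Rightarrow> 'a) topology) (topspace topX)"
    using compact_topX by (simp add: compact_space_def)
  hence "compactin euclideanreal (g ` topspace topX)" using gc by (rule image_compactin)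
  hence "compact (g ` UNIV)" by (simp add: topspace_topX compactin_euclidean_iff)
  then obtain s where s: "s \<in> g ` UNIV" "\<forall>t\<in>g ` UNIV. s \<le> t"
    using compact_attains_inf[of "g ` UNIV"] by blast
  define m where "m = s"
  have m: "m > 0" "\<And>x. m \<le> g x" using s gpos unfolding m_def by auto
  define B where "B = \<bar>ln m\<bar>"
  have B: "\<And>x. \<bar>(ln \<circ> g) x\<bar> \<le> B"
  proof -
    fix x
    have "ln m \<le> ln (g x)" using m gpos[of x] by simp
    moreover have "ln (g x) \<le> 0" using gpos[of x] glt[of x] by simp
    ultimately show "\<bar>(ln \<circ> g) x\<bar> \<le> B" unfolding B_def by auto
  qed
  have V: "ln (g x) - ln (g y) \<le> var l (ln \<circ> g)"
    if "length cw = l" "x \<in> cyl cw" "y \<in> cyl cw" for l cw x y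
    using var_prop[where \<phi> = "ln \<circ> g", OF B that] by simp
  have Vnn: "\<And>l. 0 \<le> var l (ln \<circ> g)" using var_nonneg[where \<phi> = "ln \<circ> g", OF B] by blast
  have bound: "proj_dist (\<mu>l l) \<mu> \<le> ereal (var l (ln \<circ> g))" if l: "l \<ge> 1" for l
  proof -
    have ma: "is_markov_approx \<mu> l (\<mu>l l)" using mk l by blast
    show ?thesis unfolding proj_dist_def
    proof (rule SUP_least)
      fix n :: nat assume n: "n \<in> {1..}"
      show "ereal (Max {\<bar>ln (measure (\<mu>l l) (cyl w) / measure \<mu> (cyl w))\<bar> / real n |w. length w = n})
            \<le> ereal (var l (ln \<circ> g))"
      proof (subst ereal_less_eq(3), rule Max.boundedI[OF var_set_finite])
        show "{\<bar>ln (measure (\<mu>l l) (cyl w) / measure \<mu> (cyl w))\<bar> / real n |w :: 'a list. length w = n} \<noteq> {}"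
          by (rule ccontr) (metis (mono_tags, lifting) empty_iff length_replicate mem_Collect_eq)
      next
        fix a assume "a \<in> {\<bar>ln (measure (\<mu>l l) (cyl w) / measure \<mu> (cyl w))\<bar> / real n |w :: 'a list. length w = n}"
        then obtain w :: "'a list" where w: "length w = n"
          "a = \<bar>ln (measure (\<mu>l l) (cyl w) / measure \<mu> (cyl w))\<bar> / real n" by blast
        have eq: "measure (\<mu>l l) (cyl w) = markov_cyl \<mu> l w" using ma by (simp add: is_markov_approx_def)
        have mb: "markov_cyl \<mu> l w > 0 \<and>
             \<bar>ln (markov_cyl \<mu> l w) - ln (measure \<mu> (cyl w))\<bar> \<le> real (length w - l) * var l (ln \<circ> g)"
          by (rule markov_bound[OF c gpos l V])
        have Mp: "measure \<mu> (cyl w) > 0" using M_pos[OF mu] .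
        have "\<bar>ln (measure (\<mu>l l) (cyl w) / measure \<mu> (cyl w))\<bar>
            = \<bar>ln (markov_cyl \<mu> l w) - ln (measure \<mu> (cyl w))\<bar>"
          using mb Mp by (simp add: eq ln_div)
        also have "\<dots> \<le> real (length w - l) * var l (ln \<circ> g)" using mb by simp
        also have "\<dots> \<le> real n * var l (ln \<circ> g)"
          using w(1) Vnn[of l] by (intro mult_right_mono) auto
        finally have "\<bar>ln (measure (\<mu>l l) (cyl w) / measure \<mu> (cyl w))\<bar> \<le> real n * var l (ln \<circ> g)" .
        moreover have "real n > 0" using n by simp
        ultimately show "a \<le> var l (ln \<circ> g)" using w(2) by (simp add: divide_le_eq mult.commute)
      qed
    qed
  qed
  have nonneg: "0 \<le> proj_dist (\<mu>l l) \<mu>" for l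
  proof -
    let ?S = "{\<bar>ln (measure (\<mu>l l) (cyl w) / measure \<mu> (cyl w))\<bar> / real 1 |w :: 'a list. length w = 1}"
    have "\<bar>ln (measure (\<mu>l l) (cyl [undefined]) / measure \<mu> (cyl [undefined]))\<bar> / real 1 \<in> ?S"
      by (intro CollectI exI[of _ "[undefined]"]) simp
    hence "\<bar>ln (measure (\<mu>l l) (cyl [undefined]) / measure \<mu> (cyl [undefined]))\<bar> / real 1 \<le> Max ?S"
      by (rule Max_ge[OF var_set_finite])
    hence "0 \<le> Max ?S" by simp
    hence "0 \<le> ereal (Max ?S)" by simp
    also have "ereal (Max ?S) \<le> proj_dist (\<mu>l l) \<mu>" unfolding proj_dist_def
      by (rule SUP_upper[where f = "\<lambda>n. ereal (Max {\<bar>ln (measure (\<mu>l l) (cyl w) / measure \<mu> (cyl w))\<bar> / real n |w :: 'a list. length w = n})", of 1]) simp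
    finally show ?thesis .
  qed
  have lncont: "continuous_map topX euclideanreal (ln \<circ> g)"
  proof (rule continuous_map_compose[of _ "top_of_set {0<..}"])
    show "continuous_map topX (top_of_set {0<..}) g"
      by (rule continuous_map_into_subtopology[OF gc]) (use gpos in auto)
    have "continuous_on {0<..} (ln :: real \<Rightarrow> real)"
      by (rule continuous_on_ln[OF continuous_on_id]) auto
    thus "continuous_map (top_of_set {0<..}) euclideanreal ln"
      using continuous_map_subtopology_eu[of "{0<..}" UNIV ln] by simp
  qed
  have vlim: "(\<lambda>l. var l (ln \<circ> g)) \<longlonglongrightarrow> 0"
  proof (rule LIMSEQ_I)
    fix r :: real assume r: "0 < r"
    obtain L where L: "\<And>y z. (\<forall>i<L. y i = z i) \<Longrightarrow> \<bar>(ln \<circ> g) y - (ln \<circ> g) z\<bar> < r/2"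
      using unif_cont[OF lncont, of "r/2"] r by auto
    have vs: "var l (ln \<circ> g) \<le> r/2" if "l \<ge> L" for l
    proof (rule var_small[where \<phi> = "ln \<circ> g", OF B])
      fix y z :: "nat \<Rightarrow> 'a" assume "\<forall>i<l. y i = z i"
      hence "\<forall>i<L. y i = z i" using that by simp
      thus "\<bar>(ln \<circ> g) y - (ln \<circ> g) z\<bar> \<le> r/2" using L less_imp_le by blast
    qed
    have "\<forall>l\<ge>L. norm (var l (ln \<circ> g) - 0) < r"
    proof (intro allI impI)
      fix l assume "l \<ge> L"
      hence "var l (ln \<circ> g) \<le> r/2" by (rule vs)
      thus "norm (var l (ln \<circ> g) - 0) < r" using Vnn[of l] r by simp
    qed
    thus "\<exists>no. \<forall>n\<ge>no. norm (var n (ln \<circ> g) - 0) < r" by blast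
  qed
  have "(\<lambda>l. proj_dist (\<mu>l l) \<mu>) \<longlonglongrightarrow> 0"
  proof (rule tendsto_sandwich[of "\<lambda>_. 0" _ _ "\<lambda>l. ereal (var l (ln \<circ> g))"])
    show "\<forall>\<^sub>F n in sequentially. 0 \<le> proj_dist (\<mu>l n) \<mu>" using nonneg by simp
    show "\<forall>\<^sub>F n in sequentially. proj_dist (\<mu>l n) \<mu> \<le> ereal (var n (ln \<circ> g))"
      using eventually_ge_at_top[of "1::nat"] by (rule eventually_mono) (rule bound)
    show "((\<lambda>_. 0) \<longlongrightarrow> (0::ereal)) sequentially" by simp
    show "(\<lambda>l. ereal (var l (ln \<circ> g))) \<longlonglongrightarrow> 0"
      using vlim by (simp add: zero_ereal_def lim_ereal)
  qed
  thus ?thesis using bound by blast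
qed


end
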